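(* Assume $a,b\in C^1(\mathbb{R})$ with $a>0$ everywhere, and that there is $\bar u<1$ with $$-\infty<\inf_{\mathbb{R}} b<\inf_{u\ge \bar u} b(u).$$ For each $T>0$ let $u_T$ be a minimizer of $F_T$ over $U_T$ (minimization without any contact constraint). Then there is a constant $c>0$, independent of $T$, such that for all $T>0$ $$\bigl|\{x\in[0,T]: u_T(x)\ge \bar u\}\bigr|\le c\,(1+\sqrt T),$$ where $|\cdot|$ denotes Lebesgue measure.
   Context: For $T>0$, $U_T=\{1+v: v\in H^1_0(0,T)\}$ (functions in $H^1(0,T)$ equal to $1$ at $0$ and $T$), and $F_T(u)=\int_0^T\bigl[a(u)(u')^2+b(u)\bigr]\,dx$ for $u\in U_T$. *)

theory Defs
  imports "HOL-Analysis.Analysis"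
begin

text \<open>H^1(0,T) via the absolutely continuous representative: u is in H^1(0,T)
  with weak derivative g iff g is square integrable on [0,T] and
  u x = u 0 + integral of g over [0,x] for all x in [0,T].\<close>
definition H1_with_deriv :: "real \<Rightarrow> (real \<Rightarrow> real) \<Rightarrow> (real \<Rightarrow> real) \<Rightarrow> bool" where
  "H1_with_deriv T u g \<longleftrightarrow>
     g \<in> borel_measurable lborel \<and>
     set_integrable lborel {0..T} g \<and>
     set_integrable lborel {0..T} (\<lambda>x. (g x)\<^sup>2) \<and>
     (\<forall>x\<in>{0..T}. u x = u 0 + (LBINT t=0..x. g t))"

definition in_U :: "real \<Rightarrow> (real \<Rightarrow> real) \<Rightarrow> (real \<Rightarrow> real) \<Rightarrow> bool" where
  "in_U T u g \<longleftrightarrow> H1_with_deriv T u g \<and> u 0 = 1 \<and> u T = 1"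

definition F_energy :: "(real \<Rightarrow> real) \<Rightarrow> (real \<Rightarrow> real) \<Rightarrow> real \<Rightarrow> (real \<Rightarrow> real) \<Rightarrow> (real \<Rightarrow> real) \<Rightarrow> real" where
  "F_energy a b T u g = (LBINT x:{0..T}. a (u x) * (g x)\<^sup>2 + b (u x))"

definition is_minimizer :: "(real \<Rightarrow> real) \<Rightarrow> (real \<Rightarrow> real) \<Rightarrow> real \<Rightarrow> (real \<Rightarrow> real) \<Rightarrow> bool" where
  "is_minimizer a b T u \<longleftrightarrow>
     (\<exists>g. in_U T u g \<and> (\<forall>v h. in_U T v h \<longrightarrow> F_energy a b T u g \<le> F_energy a b T v h))"

end

theory Submission imports Defs begin

definition H1on :: "real \<Rightarrow> real \<Rightarrow> (real \<Rightarrow> real) \<Rightarrow> (real \<Rightarrow> real) \<Rightarrow> bool" where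
  "H1on p q u g \<longleftrightarrow> p \<le> q \<and> g \<in> borel_measurable lborel \<and>
     g absolutely_integrable_on {p..q} \<and> (\<lambda>x. (g x)\<^sup>2) absolutely_integrable_on {p..q} \<and>
     (\<forall>x\<in>{p..q}. u x = u p + integral {p..x} g)"

definition En :: "(real \<Rightarrow> real) \<Rightarrow> (real \<Rightarrow> real) \<Rightarrow> real \<Rightarrow> real \<Rightarrow> (real \<Rightarrow> real) \<Rightarrow> (real \<Rightarrow> real) \<Rightarrow> real" where
  "En a b p q u g = integral {p..q} (\<lambda>x. a (u x) * (g x)\<^sup>2 + b (u x))"

lemma H1on_cont: assumes "H1on p q u g" shows "continuous_on {p..q} u"
proof -
  have gi: "g integrable_on {p..q}" using assms unfolding H1on_def absolutely_integrable_on_def by simp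
  have "continuous_on {p..q} (\<lambda>x. u p + integral {p..x} g)"
    by (intro continuous_intros indefinite_integral_continuous_1 gi)
  then show ?thesis
  proof (rule continuous_on_eq)
    fix x assume x: "x \<in> {p..q}"
    have h: "\<forall>x\<in>{p..q}. u x = u p + integral {p..x} g" using assms unfolding H1on_def by blast
    show "u p + integral {p..x} g = u x" using bspec[OF h x] by (rule sym)
  qed
qed

lemma En_integrable:
  assumes a: "continuous_on UNIV a" and b: "continuous_on UNIV b" and H: "H1on p q u g"
  shows "(\<lambda>x. a (u x) * (g x)\<^sup>2 + b (u x)) absolutely_integrable_on {p..q}"
proof -
  have uc: "continuous_on {p..q} u" by (rule H1on_cont[OF H])
  have ac: "continuous_on {p..q} (\<lambda>x. a (u x))"
    using continuous_on_compose2[OF a uc] by auto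
  have bc: "continuous_on {p..q} (\<lambda>x. b (u x))"
    using continuous_on_compose2[OF b uc] by auto
  have "(\<lambda>x. a (u x) * (g x)\<^sup>2) absolutely_integrable_on {p..q}"
  proof (rule absolutely_integrable_bounded_measurable_product_real)
    show "(\<lambda>x. a (u x)) \<in> borel_measurable (lebesgue_on {p..q})"
      by (rule continuous_imp_measurable_on_sets_lebesgue[OF ac]) auto
    show "bounded ((\<lambda>x. a (u x)) ` {p..q})"
      by (intro compact_imp_bounded compact_continuous_image ac) auto
  qed (use H in \<open>auto simp: H1on_def\<close>)
  moreover have "(\<lambda>x. b (u x)) absolutely_integrable_on {p..q}"
    by (rule absolutely_integrable_continuous_real[OF bc])
  ultimately show ?thesis by (rule set_integral_add(1))
qed

lemma En_meas:
  assumes a: "continuous_on UNIV a" and b: "continuous_on UNIV b" and H: "H1on p q u g"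
  shows "(\<lambda>x. indicator {p..q} x *\<^sub>R (a (u x) * (g x)\<^sup>2 + b (u x))) \<in> borel_measurable lborel"
proof -
  have uc: "continuous_on {p..q} u" by (rule H1on_cont[OF H])
  have ac: "continuous_on {p..q} (\<lambda>x. a (u x))"
    using continuous_on_compose2[OF a uc] by auto
  have bc: "continuous_on {p..q} (\<lambda>x. b (u x))"
    using continuous_on_compose2[OF b uc] by auto
  have m1: "(\<lambda>x. indicator {p..q} x *\<^sub>R a (u x)) \<in> borel_measurable borel"
    by (rule borel_measurable_continuous_on_indicator[OF _ ac]) auto
  have m2: "(\<lambda>x. indicator {p..q} x *\<^sub>R b (u x)) \<in> borel_measurable borel"
    by (rule borel_measurable_continuous_on_indicator[OF _ bc]) auto
  have g: "g \<in> borel_measurable borel" using H unfolding H1on_def by simp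
  have eq: "(\<lambda>x. indicator {p..q} x *\<^sub>R (a (u x) * (g x)\<^sup>2 + b (u x))) =
     (\<lambda>x. (indicator {p..q} x *\<^sub>R a (u x)) * (g x)\<^sup>2 + indicator {p..q} x *\<^sub>R b (u x))"
    by (auto simp: indicator_def fun_eq_iff algebra_simps)
  show ?thesis unfolding eq using m1 m2 g by measurable
qed

lemma setint_lborel:
  assumes "f absolutely_integrable_on S" "(\<lambda>x. indicator S x *\<^sub>R f x) \<in> borel_measurable lborel"
  shows "set_integrable lborel S (f::real\<Rightarrow>real)"
  using integrable_completion[OF assms(2)] assms(1) unfolding set_integrable_def by simp

lemma F_eq_En:
  assumes a: "continuous_on UNIV a" and b: "continuous_on UNIV b" and H: "H1on 0 T u g"
  shows "F_energy a b T u g = En a b 0 T u g"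
proof -
  have "set_integrable lborel {0..T} (\<lambda>x. a (u x) * (g x)\<^sup>2 + b (u x))"
    by (rule setint_lborel[OF En_integrable[OF a b H] En_meas[OF a b H]])
  then show ?thesis unfolding F_energy_def En_def
    by (rule set_borel_integral_eq_integral(2))
qed

lemma in_U_iff:
  assumes "T \<ge> 0"
  shows "in_U T u g \<longleftrightarrow> H1on 0 T u g \<and> u 0 = 1 \<and> u T = 1"
proof -
  have meas: "(\<lambda>x. indicator S x *\<^sub>R f x) \<in> borel_measurable lborel"
    if "f \<in> borel_measurable lborel" "S \<in> sets lborel" for f :: "real \<Rightarrow> real" and S
    using that by measurable
  have A: "set_integrable lborel {0..T} f \<longleftrightarrow> f absolutely_integrable_on {0..T}"
    if "f \<in> borel_measurable lborel" for f :: "real \<Rightarrow> real"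
    using meas[OF that, of "{0..T}"] integrable_completion unfolding set_integrable_def by auto
  have B: "(LBINT t=0..x. g t) = integral {0..x} g"
    if "set_integrable lborel {0..T} g" "x \<in> {0..T}" for x
  proof -
    have "set_integrable lborel {0..x} g"
      by (rule set_integrable_subset[OF that(1)]) (use that in auto)
    then show ?thesis using interval_integral_eq_integral[of 0 x g] that by (simp add: zero_ereal_def)
  qed
  show ?thesis
  proof
    assume "in_U T u g"
    then have g: "g \<in> borel_measurable lborel" "set_integrable lborel {0..T} g"
      "set_integrable lborel {0..T} (\<lambda>x. (g x)\<^sup>2)"
      "\<forall>x\<in>{0..T}. u x = u 0 + (LBINT t=0..x. g t)" "u 0 = 1" "u T = 1"
      unfolding in_U_def H1_with_deriv_def by auto
    have g2: "(\<lambda>x. (g x)\<^sup>2) \<in> borel_measurable lborel" using g(1) by measurable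
    show "H1on 0 T u g \<and> u 0 = 1 \<and> u T = 1"
      unfolding H1on_def using assms g A[OF g(1)] A[OF g2] B[OF g(2)] by simp
  next
    assume h: "H1on 0 T u g \<and> u 0 = 1 \<and> u T = 1"
    then have g: "g \<in> borel_measurable lborel" "g absolutely_integrable_on {0..T}"
      "(\<lambda>x. (g x)\<^sup>2) absolutely_integrable_on {0..T}"
      "\<forall>x\<in>{0..T}. u x = u 0 + integral {0..x} g" "u 0 = 1" "u T = 1"
      unfolding H1on_def by auto
    have g2: "(\<lambda>x. (g x)\<^sup>2) \<in> borel_measurable lborel" using g(1) by measurable
    have si: "set_integrable lborel {0..T} g" using A[OF g(1)] g(2) by simp
    show "in_U T u g"
      unfolding in_U_def H1_with_deriv_def using g A[OF g2] B[OF si] si by simp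
  qed
qed


lemma H1onD:
  assumes "H1on p q u g"
  shows "p \<le> q" "g \<in> borel_measurable lborel" "g absolutely_integrable_on {p..q}"
    "(\<lambda>x. (g x)\<^sup>2) absolutely_integrable_on {p..q}"
    "\<And>x. x \<in> {p..q} \<Longrightarrow> u x = u p + integral {p..x} g"
  using assms unfolding H1on_def by blast+

lemma H1onI:
  assumes "p \<le> q" "g \<in> borel_measurable lborel" "g absolutely_integrable_on {p..q}"
    "(\<lambda>x. (g x)\<^sup>2) absolutely_integrable_on {p..q}"
    "\<And>x. x \<in> {p..q} \<Longrightarrow> u x = u p + integral {p..x} g"
  shows "H1on p q u g"
  using assms unfolding H1on_def by blast

lemma absint_imp_int: "f absolutely_integrable_on S \<Longrightarrow> (f::real\<Rightarrow>real) integrable_on S"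
  unfolding absolutely_integrable_on_def by simp

lemma H1on_restrict:
  assumes H: "H1on p q u g" and le: "p \<le> p'" "p' \<le> q'" "q' \<le> q"
  shows "H1on p' q' u g"
proof (rule H1onI)
  show "p' \<le> q'" by fact
  show "g \<in> borel_measurable lborel" using H1onD(2)[OF H] .
  show "g absolutely_integrable_on {p'..q'}"
    by (rule absolutely_integrable_on_subinterval[OF H1onD(3)[OF H]]) (use le in auto)
  show "(\<lambda>x. (g x)\<^sup>2) absolutely_integrable_on {p'..q'}"
    by (rule absolutely_integrable_on_subinterval[OF H1onD(4)[OF H]]) (use le in auto)
  fix x assume x: "x \<in> {p'..q'}"
  have gi: "g integrable_on {p..x}"
    by (rule absint_imp_int, rule absolutely_integrable_on_subinterval[OF H1onD(3)[OF H]]) (use le x in auto)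
  have c: "integral {p..p'} g + integral {p'..x} g = integral {p..x} g"
    by (rule Henstock_Kurzweil_Integration.integral_combine) (use le x gi in auto)
  have e1: "u x = u p + integral {p..x} g" by (rule H1onD(5)[OF H]) (use le x in auto)
  have e2: "u p' = u p + integral {p..p'} g" by (rule H1onD(5)[OF H]) (use le x in auto)
  show "u x = u p' + integral {p'..x} g" using e1 e2 c by linarith
qed

lemma absint_shift:
  fixes f :: "real \<Rightarrow> real"
  assumes "f absolutely_integrable_on {p..q}"
  shows "(\<lambda>x. f (x - d)) absolutely_integrable_on {p+d..q+d}"
proof -
  have i1: "f integrable_on {p..q}" by (rule set_lebesgue_integral_eq_integral(1)[OF assms])
  have i2: "(\<lambda>x. norm (f x)) integrable_on {p..q}"
    using set_lebesgue_integral_eq_integral(1)[OF absolutely_integrable_norm[OF assms]] by (simp add: o_def)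
  from integrable_shift_real_ivl[OF i1, of "-d"] integrable_shift_real_ivl[OF i2, of "-d"]
  show ?thesis unfolding absolutely_integrable_on_def by simp
qed

lemma integral_shift_d:
  "integral {p+d..x} (\<lambda>t. f (t - d)) = integral {p..x-d} (f::real\<Rightarrow>real)"
  using integral_shift_real_ivl[of p "-d" "x-d" f] by simp

lemma H1on_shift:
  assumes H: "H1on p q u g"
  shows "H1on (p+d) (q+d) (\<lambda>x. u (x - d)) (\<lambda>x. g (x - d))"
proof (rule H1onI)
  show "p + d \<le> q + d" using H1onD(1)[OF H] by simp
  have "g \<in> borel_measurable lborel" using H1onD(2)[OF H] .
  then show "(\<lambda>x. g (x - d)) \<in> borel_measurable lborel" by measurable
  show "(\<lambda>x. g (x - d)) absolutely_integrable_on {p + d..q + d}"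
    by (rule absint_shift[OF H1onD(3)[OF H]])
  show "(\<lambda>x. (g (x - d))\<^sup>2) absolutely_integrable_on {p + d..q + d}"
    using absint_shift[OF H1onD(4)[OF H]] by simp
  fix x assume x: "x \<in> {p + d..q + d}"
  have "u (x - d) = u p + integral {p..x-d} g" by (rule H1onD(5)[OF H]) (use x in auto)
  then show "u (x - d) = u (p + d - d) + integral {p + d..x} (\<lambda>t. g (t - d))"
    using integral_shift_d[of p d x g] by simp
qed

lemma En_shift:
  "En a b (p+d) (q+d) (\<lambda>x. u (x - d)) (\<lambda>x. g (x - d)) = En a b p q u g"
  unfolding En_def
  using integral_shift_real_ivl[of p "-d" q "\<lambda>x. a (u x) * (g x)\<^sup>2 + b (u x)"] by simp

lemma H1on_glue:
  assumes H1: "H1on p q u g" and H2: "H1on q r v h" and eq: "u q = v q"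
  shows "H1on p r (\<lambda>x. if x \<le> q then u x else v x) (\<lambda>x. if x \<le> q then g x else h x)"
proof -
  have pq: "p \<le> q" and qr: "q \<le> r" using H1onD(1)[OF H1] H1onD(1)[OF H2] by auto
  have un: "{p..r} = {p..q} \<union> {q..r}" using pq qr by auto
  have absI: "(\<lambda>x. if x \<le> q then F x else G x) absolutely_integrable_on {p..r}"
    if F: "F absolutely_integrable_on {p..q}" and G: "G absolutely_integrable_on {q..r}"
    for F G :: "real \<Rightarrow> real"
  proof -
    have 1: "(\<lambda>x. if x \<le> q then F x else G x) absolutely_integrable_on {p..q}"
      by (rule absolutely_integrable_spike[OF F, of "{}"]) auto
    have 2: "(\<lambda>x. if x \<le> q then F x else G x) absolutely_integrable_on {q..r}"
      by (rule absolutely_integrable_spike[OF G, of "{q}"]) auto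
    show ?thesis unfolding un by (rule absolutely_integrable_Un[OF 1 2])
  qed
  have intI: "integral {p..x} (\<lambda>x. if x \<le> q then g x else h x) = integral {p..q} g + integral {q..x} h"
    if x: "q \<le> x" "x \<le> r" for x
  proof -
    have ai: "(\<lambda>x. if x \<le> q then g x else h x) absolutely_integrable_on {p..r}"
      by (rule absI[OF H1onD(3)[OF H1] H1onD(3)[OF H2]])
    have gi: "(\<lambda>x. if x \<le> q then g x else h x) integrable_on {p..x}"
      by (rule absint_imp_int, rule absolutely_integrable_on_subinterval[OF ai]) (use x in auto)
    have "integral {p..x} (\<lambda>x. if x \<le> q then g x else h x) =
      integral {p..q} (\<lambda>x. if x \<le> q then g x else h x) + integral {q..x} (\<lambda>x. if x \<le> q then g x else h x)"
      by (rule Henstock_Kurzweil_Integration.integral_combine[symmetric]) (use pq x gi in auto)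
    also have "integral {p..q} (\<lambda>x. if x \<le> q then g x else h x) = integral {p..q} g"
      by (rule integral_cong) auto
    also have "integral {q..x} (\<lambda>x. if x \<le> q then g x else h x) = integral {q..x} h"
      by (rule integral_spike[of "{q}"]) auto
    finally show ?thesis .
  qed
  show ?thesis
  proof (rule H1onI)
    show "p \<le> r" using pq qr by simp
    have "g \<in> borel_measurable lborel" "h \<in> borel_measurable lborel"
      using H1onD(2)[OF H1] H1onD(2)[OF H2] by auto
    then show "(\<lambda>x. if x \<le> q then g x else h x) \<in> borel_measurable lborel" by measurable
    show "(\<lambda>x. if x \<le> q then g x else h x) absolutely_integrable_on {p..r}"
      by (rule absI[OF H1onD(3)[OF H1] H1onD(3)[OF H2]])
    have "(\<lambda>x. if x \<le> q then (g x)\<^sup>2 else (h x)\<^sup>2) absolutely_integrable_on {p..r}"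
      by (rule absI[OF H1onD(4)[OF H1] H1onD(4)[OF H2]])
    moreover have "(\<lambda>x. (if x \<le> q then g x else h x)\<^sup>2) = (\<lambda>x. if x \<le> q then (g x)\<^sup>2 else (h x)\<^sup>2)"
      by (simp add: fun_eq_iff)
    ultimately show "(\<lambda>x. (if x \<le> q then g x else h x)\<^sup>2) absolutely_integrable_on {p..r}"
      by simp
    fix x assume x: "x \<in> {p..r}"
    show "(if x \<le> q then u x else v x) =
        (if p \<le> q then u p else v p) + integral {p..x} (\<lambda>x. if x \<le> q then g x else h x)"
    proof (cases "x \<le> q")
      case True
      have "integral {p..x} (\<lambda>x. if x \<le> q then g x else h x) = integral {p..x} g"
        by (rule integral_cong) (use True in auto)
      moreover have "u x = u p + integral {p..x} g" by (rule H1onD(5)[OF H1]) (use x True in auto)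
      ultimately show ?thesis using True pq by simp
    next
      case False
      have "v x = v q + integral {q..x} h" by (rule H1onD(5)[OF H2]) (use x False in auto)
      moreover have "u q = u p + integral {p..q} g" by (rule H1onD(5)[OF H1]) (use pq in auto)
      ultimately show ?thesis using False pq intI[of x] x eq by simp
    qed
  qed
qed

lemma En_glue:
  assumes a: "continuous_on UNIV a" and b: "continuous_on UNIV b"
    and H1: "H1on p q u g" and H2: "H1on q r v h" and eq: "u q = v q"
  shows "En a b p r (\<lambda>x. if x \<le> q then u x else v x) (\<lambda>x. if x \<le> q then g x else h x)
     = En a b p q u g + En a b q r v h"
proof -
  have pq: "p \<le> q" and qr: "q \<le> r" using H1onD(1)[OF H1] H1onD(1)[OF H2] by auto
  let ?w = "\<lambda>x. if x \<le> q then u x else v x" and ?k = "\<lambda>x. if x \<le> q then g x else h x"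
  have H: "H1on p r ?w ?k" by (rule H1on_glue[OF H1 H2 eq])
  have I: "(\<lambda>x. a (?w x) * (?k x)\<^sup>2 + b (?w x)) integrable_on {p..r}"
    by (rule absint_imp_int[OF En_integrable[OF a b H]])
  have "En a b p r ?w ?k = integral {p..q} (\<lambda>x. a (?w x) * (?k x)\<^sup>2 + b (?w x))
       + integral {q..r} (\<lambda>x. a (?w x) * (?k x)\<^sup>2 + b (?w x))"
    unfolding En_def by (rule Henstock_Kurzweil_Integration.integral_combine[symmetric]) (use pq qr I in auto)
  also have "integral {p..q} (\<lambda>x. a (?w x) * (?k x)\<^sup>2 + b (?w x)) = En a b p q u g"
    unfolding En_def by (rule integral_cong) auto
  also have "integral {q..r} (\<lambda>x. a (?w x) * (?k x)\<^sup>2 + b (?w x)) = En a b q r v h"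
    unfolding En_def by (rule integral_spike[of "{q}"]) auto
  finally show ?thesis .
qed

lemma H1on_lin:
  assumes "p \<le> q"
  shows "H1on p q (\<lambda>x. y0 + k * (x - p)) (\<lambda>x. k)"
  by (rule H1onI) (use assms in \<open>auto simp: absolutely_integrable_continuous_real algebra_simps\<close>)

lemma H1on_const:
  assumes "p \<le> q"
  shows "H1on p q (\<lambda>x. c) (\<lambda>x. 0)"
  by (rule H1onI) (use assms in auto)

lemma En_const: "p \<le> q \<Longrightarrow> En a b p q (\<lambda>x. c) (\<lambda>x. 0) = b c * (q - p)"
  unfolding En_def by simp

lemma En_split:
  assumes a: "continuous_on UNIV a" and b: "continuous_on UNIV b"
    and H: "H1on p r u g" and le: "p \<le> q" "q \<le> r"
  shows "En a b p r u g = En a b p q u g + En a b q r u g"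
proof -
  have I: "(\<lambda>x. a (u x) * (g x)\<^sup>2 + b (u x)) integrable_on {p..r}"
    by (rule absint_imp_int[OF En_integrable[OF a b H]])
  show ?thesis unfolding En_def by (rule Henstock_Kurzweil_Integration.integral_combine[symmetric]) (use le I in auto)
qed

lemma En_ge:
  assumes a: "continuous_on UNIV a" and b: "continuous_on UNIV b" and apos: "\<And>s. a s > 0"
    and H: "H1on p q u g"
  shows "integral {p..q} (\<lambda>x. b (u x)) \<le> En a b p q u g"
  unfolding En_def
proof (rule integral_le)
  show "(\<lambda>x. a (u x) * (g x)\<^sup>2 + b (u x)) integrable_on {p..q}"
    by (rule absint_imp_int[OF En_integrable[OF a b H]])
  have "continuous_on {p..q} (\<lambda>x. b (u x))"
    using continuous_on_compose2[OF b H1on_cont[OF H]] by auto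
  then show "(\<lambda>x. b (u x)) integrable_on {p..q}" by (rule integrable_continuous_real)
  fix x show "b (u x) \<le> a (u x) * (g x)\<^sup>2 + b (u x)"
    using apos[of "u x"] by (simp add: less_imp_le)
qed


lemma glue_ex:
  assumes a: "continuous_on UNIV a" and b: "continuous_on UNIV b"
    and H1: "H1on p q u g" and H2: "H1on q r v h" and eq: "u q = v q"
  shows "\<exists>W H. H1on p r W H \<and> W p = u p \<and> W r = v r \<and>
     En a b p r W H = En a b p q u g + En a b q r v h"
proof (intro exI conjI)
  have pq: "p \<le> q" and qr: "q \<le> r" using H1onD(1)[OF H1] H1onD(1)[OF H2] by auto
  show "H1on p r (\<lambda>x. if x \<le> q then u x else v x) (\<lambda>x. if x \<le> q then g x else h x)"
    by (rule H1on_glue[OF H1 H2 eq])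
  show "En a b p r (\<lambda>x. if x \<le> q then u x else v x) (\<lambda>x. if x \<le> q then g x else h x)
     = En a b p q u g + En a b q r v h" by (rule En_glue[OF a b H1 H2 eq])
  show "(if p \<le> q then u p else v p) = u p" using pq by simp
  show "(if r \<le> q then u r else v r) = v r" using qr eq by auto
qed

definition Rc :: "(real \<Rightarrow> real) \<Rightarrow> (real \<Rightarrow> real) \<Rightarrow> real \<Rightarrow> real \<Rightarrow> real" where
  "Rc a b y0 y1 = En a b 0 1 (\<lambda>x. y0 + (y1 - y0) * (x - 0)) (\<lambda>x. y1 - y0)"

lemma ramp:
  assumes "t = p + 1"
  shows "H1on p t (\<lambda>x. ya + (yb - ya) * (x - p)) (\<lambda>x. yb - ya)"
    "En a b p t (\<lambda>x. ya + (yb - ya) * (x - p)) (\<lambda>x. yb - ya) = Rc a b ya yb"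
proof -
  show "H1on p t (\<lambda>x. ya + (yb - ya) * (x - p)) (\<lambda>x. yb - ya)"
    by (rule H1on_lin) (use assms in simp)
  have "En a b (0 + p) (1 + p) (\<lambda>x. ya + (yb - ya) * ((x - p) - 0)) (\<lambda>x. yb - ya) = Rc a b ya yb"
    unfolding Rc_def by (rule En_shift)
  then show "En a b p t (\<lambda>x. ya + (yb - ya) * (x - p)) (\<lambda>x. yb - ya) = Rc a b ya yb"
    using assms by (simp add: add.commute)
qed

lemma piece:
  assumes a: "continuous_on UNIV a" and b: "continuous_on UNIV b"
    and H: "H1on 0 T U g" and le: "0 \<le> s1" "s1 \<le> s2" "s2 \<le> T"
    and t: "t1 = s1 + d" "t2 = s2 + d"
  shows "H1on t1 t2 (\<lambda>x. U (x - d)) (\<lambda>x. g (x - d))"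
    "En a b t1 t2 (\<lambda>x. U (x - d)) (\<lambda>x. g (x - d)) = En a b s1 s2 U g"
proof -
  have H': "H1on s1 s2 U g" by (rule H1on_restrict[OF H le])
  show "H1on t1 t2 (\<lambda>x. U (x - d)) (\<lambda>x. g (x - d))"
    unfolding t by (rule H1on_shift[OF H'])
  show "En a b t1 t2 (\<lambda>x. U (x - d)) (\<lambda>x. g (x - d)) = En a b s1 s2 U g"
    unfolding t by (rule En_shift)
qed

lemma upper:
  assumes a: "continuous_on UNIV a" and b: "continuous_on UNIV b" and T: "T \<ge> 2"
    and min: "\<And>W H. H1on 0 T W H \<Longrightarrow> W 0 = 1 \<Longrightarrow> W T = 1 \<Longrightarrow> E0 \<le> En a b 0 T W H"
  shows "E0 \<le> Rc a b 1 s + b s * (T - 2) + Rc a b s 1"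
proof -
  have P1: "H1on 0 1 (\<lambda>x. 1 + (s - 1) * (x - 0)) (\<lambda>x. s - 1)"
    and E1: "En a b 0 1 (\<lambda>x. 1 + (s - 1) * (x - 0)) (\<lambda>x. s - 1) = Rc a b 1 s"
    using ramp(1)[where t=1 and p=0 and ya=1 and yb=s] ramp(2)[where t=1 and p=0 and ya=1 and yb=s and a=a and b=b] by auto
  have P2: "H1on 1 (T - 1) (\<lambda>x. s) (\<lambda>x. 0)" by (rule H1on_const) (use T in simp)
  have E2: "En a b 1 (T - 1) (\<lambda>x. s) (\<lambda>x. 0) = b s * (T - 2)"
    using En_const[of 1 "T - 1" a b s] T by simp
  have P3: "H1on (T - 1) T (\<lambda>x. s + (1 - s) * (x - (T - 1))) (\<lambda>x. 1 - s)"
    and E3: "En a b (T - 1) T (\<lambda>x. s + (1 - s) * (x - (T - 1))) (\<lambda>x. 1 - s) = Rc a b s 1"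
    using ramp(1)[where t=T and p="T - 1" and ya=s and yb=1] ramp(2)[where t=T and p="T - 1" and ya=s and yb=1 and a=a and b=b] by auto
  obtain W23 H23 where W23: "H1on 1 T W23 H23" "W23 1 = s" "W23 T = 1"
     "En a b 1 T W23 H23 = b s * (T - 2) + Rc a b s 1"
    using glue_ex[OF a b P2 P3] E2 E3 by auto
  obtain W H where W: "H1on 0 T W H" "W 0 = 1" "W T = 1"
     "En a b 0 T W H = Rc a b 1 s + (b s * (T - 2) + Rc a b s 1)"
    using glue_ex[OF a b P1 W23(1)] E1 W23 by auto
  show ?thesis using min[OF W(1-3)] W(4) by simp
qed

lemma lower:
  assumes a: "continuous_on UNIV a" and b: "continuous_on UNIV b"
    and H: "H1on 0 T U g"
    and le: "0 \<le> p" "p \<le> x0" "x0 \<le> q" "q \<le> T" and Up: "U p = ubar" and Uq: "U q = ubar"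
    and L: "L = T - 2 - (q - p)" "L \<ge> 0"
    and min: "\<And>W H. H1on 0 T W H \<Longrightarrow> W 0 = 1 \<Longrightarrow> W T = 1 \<Longrightarrow> E0 \<le> En a b 0 T W H"
  shows "E0 \<le> Rc a b 1 ubar + En a b p x0 U g + b (U x0) * L + En a b x0 q U g + Rc a b ubar 1"
proof -
  define e1 where "e1 = x0 + (1 - p)"
  define e2 where "e2 = e1 + L"
  define d2 where "d2 = e2 - x0"
  have T1: "T - 1 = q + d2" unfolding d2_def e2_def e1_def L by simp
  have P1: "H1on 0 1 (\<lambda>x. 1 + (ubar - 1) * (x - 0)) (\<lambda>x. ubar - 1)"
    and E1: "En a b 0 1 (\<lambda>x. 1 + (ubar - 1) * (x - 0)) (\<lambda>x. ubar - 1) = Rc a b 1 ubar"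
    using ramp(1)[where t=1 and p=0 and ya=1 and yb=ubar] ramp(2)[where t=1 and p=0 and ya=1 and yb=ubar and a=a and b=b] by auto
  have P2: "H1on 1 e1 (\<lambda>x. U (x - (1 - p))) (\<lambda>x. g (x - (1 - p)))"
    and E2: "En a b 1 e1 (\<lambda>x. U (x - (1 - p))) (\<lambda>x. g (x - (1 - p))) = En a b p x0 U g"
    using piece[OF a b H, of p x0 1 "1 - p" e1] le unfolding e1_def by auto
  have P3: "H1on e1 e2 (\<lambda>x. U x0) (\<lambda>x. 0)" by (rule H1on_const) (use L in \<open>simp add: e2_def\<close>)
  have E3: "En a b e1 e2 (\<lambda>x. U x0) (\<lambda>x. 0) = b (U x0) * L"
    using En_const[of e1 e2 a b "U x0"] L by (simp add: e2_def)
  have P4: "H1on e2 (T - 1) (\<lambda>x. U (x - d2)) (\<lambda>x. g (x - d2))"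
    and E4: "En a b e2 (T - 1) (\<lambda>x. U (x - d2)) (\<lambda>x. g (x - d2)) = En a b x0 q U g"
    using piece[OF a b H, of x0 q e2 d2 "T - 1"] le T1 unfolding d2_def by auto
  have P5: "H1on (T - 1) T (\<lambda>x. ubar + (1 - ubar) * (x - (T - 1))) (\<lambda>x. 1 - ubar)"
    and E5: "En a b (T - 1) T (\<lambda>x. ubar + (1 - ubar) * (x - (T - 1))) (\<lambda>x. 1 - ubar) = Rc a b ubar 1"
    using ramp(1)[where t=T and p="T - 1" and ya=ubar and yb=1] ramp(2)[where t=T and p="T - 1" and ya=ubar and yb=1 and a=a and b=b] by auto
  have v4: "U ((T - 1) - d2) = ubar" using T1 Uq by simp
  obtain W45 H45 where W45: "H1on e2 T W45 H45" "W45 e2 = U x0" "W45 T = 1"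
     "En a b e2 T W45 H45 = En a b x0 q U g + Rc a b ubar 1"
    using glue_ex[OF a b P4 P5] E4 E5 v4 unfolding d2_def by auto
  obtain W35 H35 where W35: "H1on e1 T W35 H35" "W35 e1 = U x0" "W35 T = 1"
     "En a b e1 T W35 H35 = b (U x0) * L + (En a b x0 q U g + Rc a b ubar 1)"
    using glue_ex[OF a b P3 W45(1)] E3 W45 by auto
  obtain W25 H25 where W25: "H1on 1 T W25 H25" "W25 1 = ubar" "W25 T = 1"
     "En a b 1 T W25 H25 = En a b p x0 U g + (b (U x0) * L + (En a b x0 q U g + Rc a b ubar 1))"
    using glue_ex[OF a b P2 W35(1)] E2 W35 Up unfolding e1_def by auto
  obtain W H where W: "H1on 0 T W H" "W 0 = 1" "W T = 1"
     "En a b 0 T W H = Rc a b 1 ubar + (En a b p x0 U g + (b (U x0) * L + (En a b x0 q U g + Rc a b ubar 1)))"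
    using glue_ex[OF a b P1 W25(1)] E1 W25 by auto
  show ?thesis using min[OF W(1-3)] W(4) by simp
qed


lemma lowbound:
  fixes f :: "real \<Rightarrow> real" and S :: "real set"
  assumes "f integrable_on {p..q}" "(indicator S :: real \<Rightarrow> real) integrable_on {p..q}"
    "\<And>x. x \<in> {p..q} \<Longrightarrow> \<beta> + k * indicator S x \<le> f x" "p \<le> q"
  shows "\<beta> * (q - p) + k * integral {p..q} (indicator S :: real \<Rightarrow> real) \<le> integral {p..q} f"
proof -
  have i2: "(\<lambda>x. k *\<^sub>R (indicator S x :: real)) integrable_on {p..q}"
    by (rule integrable_cmul[OF assms(2)])
  have i1: "(\<lambda>x. \<beta>) integrable_on {p..q}" by (rule integrable_const_ivl)
  have le: "integral {p..q} (\<lambda>x. \<beta> + k *\<^sub>R (indicator S x :: real)) \<le> integral {p..q} f"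
    by (rule integral_le[OF integrable_add[OF i1 i2] assms(1)]) (use assms(3) in simp)
  have e1: "integral {p..q} (\<lambda>x. \<beta> + k *\<^sub>R (indicator S x :: real)) =
     integral {p..q} (\<lambda>x. \<beta>) + integral {p..q} (\<lambda>x. k *\<^sub>R (indicator S x :: real))"
    by (rule integral_add[OF i1 i2])
  have e2: "integral {p..q} (\<lambda>x. k *\<^sub>R (indicator S x :: real)) = k *\<^sub>R integral {p..q} (indicator S :: real \<Rightarrow> real)"
    by (rule integral_cmul)
  have e3: "integral {p..q} (\<lambda>x. \<beta>) = (q - p) *\<^sub>R \<beta>"
    using assms(4) by (simp only: integral_const_real content_real)
  show ?thesis using le e1 e2 e3 by (simp add: algebra_simps)
qed

lemma chi_int:
  fixes S :: "real set"
  assumes "compact S"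
  shows "(indicator S :: real \<Rightarrow> real) integrable_on {p..q}"
  unfolding integrable_on_indicator
  by (rule lmeasurable_compact) (use assms in auto)

lemma chi_le:
  fixes S :: "real set"
  assumes "compact S" "p \<le> q"
  shows "integral {p..q} (indicator S :: real \<Rightarrow> real) \<le> q - p"
proof -
  have "integral {p..q} (indicator S :: real \<Rightarrow> real) \<le> integral {p..q} (\<lambda>x. 1)"
    by (rule integral_le[OF chi_int[OF assms(1)] integrable_const_ivl]) (simp add: indicator_def)
  then show ?thesis using assms(2) by simp
qed

theorem mainTheorem2:
  fixes a b :: "real \<Rightarrow> real" and ubar :: real and u :: "real \<Rightarrow> real \<Rightarrow> real"
  assumes "a C1_differentiable_on UNIV" and "b C1_differentiable_on UNIV"
    and "\<And>s. a s > 0"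
    and "ubar < 1"
    and "bdd_below (range b)"
    and "Inf (range b) < Inf (b ` {ubar..})"
    and "\<And>T. T > 0 \<Longrightarrow> is_minimizer a b T (u T)"
  shows "\<exists>c>0. \<forall>T>0. measure lebesgue {x\<in>{0..T}. u T x \<ge> ubar} \<le> c * (1 + sqrt T)"
proof -
  have ac: "continuous_on UNIV a" using assms(1) by (rule C1_differentiable_imp_continuous_on)
  have bc: "continuous_on UNIV b" using assms(2) by (rule C1_differentiable_imp_continuous_on)
  define m where "m = Inf (range b)"
  define M where "M = Inf (b ` {ubar..})"
  define dl where "dl = M - m"
  have dl: "dl > 0" using assms(6) by (simp add: m_def M_def dl_def)
  have Mdl: "M = m + dl" by (simp add: dl_def)
  have bm: "m \<le> b y" for y unfolding m_def by (rule cInf_lower) (use assms(5) in auto)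
  have bddM: "bdd_below (b ` {ubar..})" by (rule bdd_below_mono[OF assms(5)]) auto
  have bM: "M \<le> b y" if "ubar \<le> y" for y unfolding M_def
    by (rule cInf_lower[OF _ bddM]) (use that in auto)
  have "\<exists>z\<in>range b. z < m + dl / 4" unfolding m_def by (rule cInf_lessD) (use dl m_def in auto)
  then obtain s where s: "b s < m + dl / 4" by auto
  define K where "K = Rc a b 1 s + Rc a b s 1 - 2 * b s"
  define T0 where "T0 = max 2 (4 * \<bar>K\<bar> / dl + 1)"
  define C1 where "C1 = max 2 (2 * (Rc a b 1 ubar + Rc a b ubar 1 - 2 * m) / dl)"
  define c where "c = max T0 C1"
  have c0: "c > 0" unfolding c_def T0_def by simp
  show ?thesis
  proof (intro exI[of _ c] conjI allI impI)
    show "c > 0" by (rule c0)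
    fix T :: real assume T: "T > 0"
    define U where "U = u T"
    obtain g where inU: "in_U T U g"
      and min0: "\<forall>v h. in_U T v h \<longrightarrow> F_energy a b T U g \<le> F_energy a b T v h"
      using assms(7)[OF T] unfolding is_minimizer_def U_def by blast
    have HU: "H1on 0 T U g" "U 0 = 1" "U T = 1" using in_U_iff[of T U g] inU T by auto
    have min: "En a b 0 T U g \<le> En a b 0 T W H"
      if "H1on 0 T W H" "W 0 = 1" "W T = 1" for W H
    proof -
      have "in_U T W H" using in_U_iff[of T W H] that T by auto
      then have "F_energy a b T U g \<le> F_energy a b T W H" using min0 by blast
      then show ?thesis using F_eq_En[OF ac bc HU(1)] F_eq_En[OF ac bc that(1)] by simp
    qed
    define S where "S = {x\<in>{0..T}. ubar \<le> U x}"
    have Ucont: "continuous_on {0..T} U" by (rule H1on_cont[OF HU(1)])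
    have Sclosed: "closed S" unfolding S_def
      by (rule continuous_on_closed_Collect_le[OF continuous_on_const Ucont]) simp
    have "bounded S" by (rule bounded_subset[of "{0..T}"]) (auto simp: S_def)
    then have Scomp: "compact S" using Sclosed by (simp add: compact_eq_bounded_closed)
    have Slm: "S \<in> lmeasurable" by (rule lmeasurable_compact[OF Scomp])
    have mS: "measure lebesgue S = integral {0..T} (indicator S :: real \<Rightarrow> real)"
    proof -
      have "integral {0..T} (indicator S :: real \<Rightarrow> real) = integral {0..T} (\<lambda>x. if x \<in> S then 1 else 0)"
        by (rule integral_cong) (simp add: indicator_def)
      also have "\<dots> = integral (S \<inter> {0..T}) (\<lambda>x. 1)" by (rule integral_restrict_Int)
      also have "S \<inter> {0..T} = S" by (auto simp: S_def)
      finally show ?thesis using lmeasure_integral[OF Slm] by simp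
    qed
    have goalS: "{x\<in>{0..T}. u T x \<ge> ubar} = S" by (simp add: S_def U_def)
    have "measure lebesgue S \<le> c * (1 + sqrt T)"
    proof (cases "T < T0")
      case True
      have "measure lebesgue S \<le> T" using mS chi_le[OF Scomp, of 0 T] T by simp
      also have "T \<le> c" using True unfolding c_def by simp
      also have "c \<le> c * (1 + sqrt T)" using c0 T by simp
      finally show ?thesis .
    next
      case False
      then have TT0: "T \<ge> T0" by simp
      then have T2: "T \<ge> 2" unfolding T0_def by simp
      have up: "En a b 0 T U g \<le> Rc a b 1 s + b s * (T - 2) + Rc a b s 1"
        by (rule upper[OF ac bc T2 min])
      have bUc: "continuous_on {0..T} (\<lambda>x. b (U x))"
        using continuous_on_compose2[OF bc Ucont] by auto
      obtain x0 where x0: "x0 \<in> {0..T}" and x0min: "\<And>y. y \<in> {0..T} \<Longrightarrow> b (U x0) \<le> b (U y)"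
        using continuous_attains_inf[OF compact_Icc _ bUc] T by auto
      define be where "be = b (U x0)"
      have "integral {0..T} (\<lambda>x. be) \<le> integral {0..T} (\<lambda>x. b (U x))"
        by (rule integral_le[OF integrable_const_ivl integrable_continuous_real[OF bUc]])
           (use x0min in \<open>auto simp: be_def\<close>)
      then have "be * T \<le> integral {0..T} (\<lambda>x. b (U x))" using T by (simp add: mult.commute)
      also have "\<dots> \<le> En a b 0 T U g" by (rule En_ge[OF ac bc assms(3) HU(1)])
      finally have "be * T \<le> b s * T + K" using up unfolding K_def by (simp add: algebra_simps)
      then have k1: "(be - b s) * T \<le> \<bar>K\<bar>" by (simp add: algebra_simps)
      have "4 * \<bar>K\<bar> / dl < T" using TT0 unfolding T0_def by simp
      then have "4 * \<bar>K\<bar> < T * dl" using dl by (simp add: divide_less_eq)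
      then have h: "\<bar>K\<bar> \<le> T * dl / 4" by simp
      have eq: "T * dl / 4 = (dl / 4) * T" by simp
      have "(be - b s) * T \<le> (dl / 4) * T" using k1 h eq by linarith
      then have "be - b s \<le> dl / 4" using T by simp
      then have be_small: "be < m + dl / 2" using s by simp
      have bem: "m \<le> be" unfolding be_def by (rule bm)
      have Ux0: "U x0 < ubar"
      proof (rule ccontr)
        assume "\<not> U x0 < ubar"
        then have "M \<le> be" unfolding be_def using bM by simp
        then show False using be_small dl Mdl by linarith
      qed
      define A where "A = {x\<in>{0..x0}. ubar \<le> U x}"
      have Ucont0: "continuous_on {0..x0} U" by (rule continuous_on_subset[OF Ucont]) (use x0 in auto)
      have Acl: "closed A" unfolding A_def
        by (rule continuous_on_closed_Collect_le[OF continuous_on_const Ucont0]) simp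
      have A0: "0 \<in> A" using HU(2) assms(4) x0 by (simp add: A_def)
      have Abdd: "bdd_above A" unfolding A_def by (rule bdd_aboveI[of _ x0]) auto
      define p where "p = Sup A"
      have pA: "p \<in> A" unfolding p_def by (rule closed_contains_Sup[OF _ Abdd Acl]) (use A0 in auto)
      have Aup: "x \<le> p" if "x \<in> A" for x unfolding p_def by (rule cSup_upper[OF that Abdd])
      have p0: "0 \<le> p" "p \<le> x0" "ubar \<le> U p" using pA by (auto simp: A_def)
      have Up: "U p = ubar"
      proof -
        have "continuous_on {p..x0} U" by (rule continuous_on_subset[OF Ucont]) (use p0 x0 in auto)
        then obtain y where y: "p \<le> y" "y \<le> x0" "U y = ubar"
          using IVT2'[of U x0 ubar p] Ux0 p0 by auto
        then have "y \<in> A" using p0 by (auto simp: A_def)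
        then have "y \<le> p" by (rule Aup)
        then show ?thesis using y by simp
      qed
      have below1: "U x < ubar" if "p < x" "x \<le> x0" for x
      proof (rule ccontr)
        assume "\<not> U x < ubar"
        then have "x \<in> A" using that p0 by (auto simp: A_def)
        then show False using Aup[of x] that by simp
      qed
      define B where "B = {x\<in>{x0..T}. ubar \<le> U x}"
      have Ucont1: "continuous_on {x0..T} U" by (rule continuous_on_subset[OF Ucont]) (use x0 in auto)
      have Bcl: "closed B" unfolding B_def
        by (rule continuous_on_closed_Collect_le[OF continuous_on_const Ucont1]) simp
      have BT: "T \<in> B" using HU(3) assms(4) x0 by (simp add: B_def)
      have Bbdd: "bdd_below B" unfolding B_def by (rule bdd_belowI[of _ x0]) auto
      define q where "q = Inf B"
      have qB: "q \<in> B" unfolding q_def by (rule closed_contains_Inf[OF _ Bbdd Bcl]) (use BT in auto)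
      have Blow: "q \<le> x" if "x \<in> B" for x unfolding q_def by (rule cInf_lower[OF that Bbdd])
      have q0: "x0 \<le> q" "q \<le> T" "ubar \<le> U q" using qB by (auto simp: B_def)
      have Uq: "U q = ubar"
      proof -
        have "continuous_on {x0..q} U" by (rule continuous_on_subset[OF Ucont]) (use q0 x0 in auto)
        then obtain y where y: "x0 \<le> y" "y \<le> q" "U y = ubar"
          using IVT'[of U x0 ubar q] Ux0 q0 by auto
        then have "y \<in> B" using q0 by (auto simp: B_def)
        then have "q \<le> y" by (rule Blow)
        then show ?thesis using y by simp
      qed
      have below2: "U x < ubar" if "x0 \<le> x" "x < q" for x
      proof (rule ccontr)
        assume "\<not> U x < ubar"
        then have "x \<in> B" using that q0 by (auto simp: B_def)
        then show False using Blow[of x] that by simp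
      qed
      have chi0: "(indicator S x :: real) = 0" if "p < x" "x < q" for x
      proof -
        have "U x < ubar" using below1[of x] below2[of x] that by linarith
        then show ?thesis by (simp add: S_def indicator_def)
      qed
      have Ipq: "integral {p..q} (indicator S :: real \<Rightarrow> real) = 0"
      proof -
        have "integral {p..q} (indicator S :: real \<Rightarrow> real) = integral {p..q} (\<lambda>x. 0)"
          by (rule integral_spike[of "{p, q}"]) (use chi0 in auto)
        then show ?thesis by simp
      qed
      have pq: "p \<le> q" using p0 q0 by simp
      have split: "measure lebesgue S = integral {0..p} (indicator S :: real \<Rightarrow> real)
          + integral {q..T} (indicator S :: real \<Rightarrow> real)"
      proof -
        have "integral {0..T} (indicator S :: real \<Rightarrow> real) = integral {0..q} (indicator S :: real \<Rightarrow> real)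
            + integral {q..T} (indicator S :: real \<Rightarrow> real)"
          by (rule Henstock_Kurzweil_Integration.integral_combine[symmetric])
             (use p0 q0 chi_int[OF Scomp] in auto)
        moreover have "integral {0..q} (indicator S :: real \<Rightarrow> real) = integral {0..p} (indicator S :: real \<Rightarrow> real)
            + integral {p..q} (indicator S :: real \<Rightarrow> real)"
          by (rule Henstock_Kurzweil_Integration.integral_combine[symmetric])
             (use p0 q0 chi_int[OF Scomp] in auto)
        ultimately show ?thesis using mS Ipq by simp
      qed
      have "measure lebesgue S \<le> C1"
      proof (cases "T - 2 - (q - p) \<ge> 0")
        case False
        have "measure lebesgue S \<le> (p - 0) + (T - q)"
          using split chi_le[OF Scomp, of 0 p] chi_le[OF Scomp, of q T] p0 q0 by simp
        also have "\<dots> \<le> C1" using False unfolding C1_def by simp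
        finally show ?thesis .
      next
        case True
        define L where "L = T - 2 - (q - p)"
        have low: "En a b 0 T U g \<le> Rc a b 1 ubar + En a b p x0 U g + b (U x0) * L + En a b x0 q U g + Rc a b ubar 1"
          by (rule lower[OF ac bc HU(1) p0(1) p0(2) q0(1) q0(2) Up Uq L_def _ min]) (use True L_def in simp)
        have H0p: "H1on 0 p U g" by (rule H1on_restrict[OF HU(1)]) (use p0 q0 in auto)
        have HpT: "H1on p T U g" by (rule H1on_restrict[OF HU(1)]) (use p0 q0 in auto)
        have Hx0T: "H1on x0 T U g" by (rule H1on_restrict[OF HU(1)]) (use p0 q0 in auto)
        have HqT: "H1on q T U g" by (rule H1on_restrict[OF HU(1)]) (use p0 q0 in auto)
        have e1: "En a b 0 T U g = En a b 0 p U g + En a b p T U g"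
          by (rule En_split[OF ac bc HU(1)]) (use p0 q0 in auto)
        have e2: "En a b p T U g = En a b p x0 U g + En a b x0 T U g"
          by (rule En_split[OF ac bc HpT]) (use p0 q0 in auto)
        have e3: "En a b x0 T U g = En a b x0 q U g + En a b q T U g"
          by (rule En_split[OF ac bc Hx0T]) (use p0 q0 in auto)
        have key: "En a b 0 p U g + En a b q T U g \<le> Rc a b 1 ubar + Rc a b ubar 1 + be * L"
          using low e1 e2 e3 unfolding be_def by simp
        have pw: "be + dl / 2 * indicator S x \<le> b (U x)" if "x \<in> {0..T}" for x
        proof (cases "x \<in> S")
          case True
          then have "M \<le> b (U x)" using bM by (simp add: S_def)
          moreover have "be + dl / 2 * indicator S x = be + dl / 2" using True by simp
          ultimately show ?thesis using be_small Mdl dl by linarith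
        next
          case False
          then show ?thesis using x0min[OF that] unfolding be_def by simp
        qed
        have bUc0: "continuous_on {0..p} (\<lambda>x. b (U x))" by (rule continuous_on_subset[OF bUc]) (use p0 q0 in auto)
        have bUc1: "continuous_on {q..T} (\<lambda>x. b (U x))" by (rule continuous_on_subset[OF bUc]) (use p0 q0 in auto)
        have l1: "be * (p - 0) + dl / 2 * integral {0..p} (indicator S :: real \<Rightarrow> real) \<le> integral {0..p} (\<lambda>x. b (U x))"
          by (rule lowbound[OF integrable_continuous_real[OF bUc0] chi_int[OF Scomp]]) (use pw p0 q0 in auto)
        have l2: "be * (T - q) + dl / 2 * integral {q..T} (indicator S :: real \<Rightarrow> real) \<le> integral {q..T} (\<lambda>x. b (U x))"
          by (rule lowbound[OF integrable_continuous_real[OF bUc1] chi_int[OF Scomp]]) (use pw p0 q0 in auto)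
        have l3: "integral {0..p} (\<lambda>x. b (U x)) \<le> En a b 0 p U g" by (rule En_ge[OF ac bc assms(3) H0p])
        have l4: "integral {q..T} (\<lambda>x. b (U x)) \<le> En a b q T U g" by (rule En_ge[OF ac bc assms(3) HqT])
        have "dl / 2 * measure lebesgue S \<le> Rc a b 1 ubar + Rc a b ubar 1 - 2 * be"
          using key l1 l2 l3 l4 split unfolding L_def by (simp add: algebra_simps)
        also have "\<dots> \<le> Rc a b 1 ubar + Rc a b ubar 1 - 2 * m" using bem by simp
        finally have "measure lebesgue S \<le> 2 * (Rc a b 1 ubar + Rc a b ubar 1 - 2 * m) / dl"
          using dl by (simp add: field_simps)
        then show ?thesis unfolding C1_def by simp
      qed
      also have "C1 \<le> c" unfolding c_def by simp
      also have "c \<le> c * (1 + sqrt T)" using c0 T by simp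
      finally show ?thesis .
    qed
    then show "measure lebesgue {x\<in>{0..T}. u T x \<ge> ubar} \<le> c * (1 + sqrt T)" using goalS by simp
  qed
qed

end
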